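(* Let $\Gamma\subset\mathbb{R}^2$ be an arbitrary polygon, i.e. a finite union of straight line segments. Then there exists a set $A\subset\mathbb{R}^2$ of full Lebesgue measure such that $A+\Gamma$ has empty interior.
   Context: $X+Y=\{x+y:x\in X,y\in Y\}$; "full measure" means the complement has two-dimensional Lebesgue measure zero. *)

theory Defs
  imports "HOL-Analysis.Analysis"
begin

definition minkowski_sum :: "(real^2) set \<Rightarrow> (real^2) set \<Rightarrow> (real^2) set" where
  "minkowski_sum X Y = {x + y | x y. x \<in> X \<and> y \<in> Y}"

definition polygon :: "(real^2) set \<Rightarrow> bool" where
  "polygon G \<longleftrightarrow> (\<exists>S. finite S \<and> G = (\<Union>(a,b)\<in>S. closed_segment a b))"

end

theory Submission
  imports Defs
begin

lemma polygon_negligible: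
  assumes "polygon (G :: (real^2) set)"
  shows "negligible G"
proof -
  obtain S where S: "finite S" "G = (\<Union>(a,b)\<in>S. closed_segment a b)"
    using assms unfolding polygon_def by blast
  have seg: "negligible (closed_segment a b)" for a b :: "real^2"
    using negligible_convex_interior[of "closed_segment a b"]
      interior_closed_segment_ge2[of a b] by simp
  show ?thesis unfolding S(2)
    by (rule negligible_Union) (use S(1) seg in auto)
qed

theorem mainTheorem11:
  fixes \<Gamma> :: "(real^2) set"
  assumes "polygon \<Gamma>"
  shows "\<exists>A. (UNIV - A) \<in> null_sets lebesgue \<and> interior (minkowski_sum A \<Gamma>) = {}"
proof -
  obtain D :: "(real^2) set" where D: "countable D"
    "\<And>X. open X \<Longrightarrow> X \<noteq> {} \<Longrightarrow> \<exists>d\<in>D. d \<in> X"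
    using countable_dense_exists by blast
  define N where "N = (\<Union>z\<in>D. (\<lambda>g. z - g) ` \<Gamma>)"
  have negG: "negligible \<Gamma>" using polygon_negligible[OF assms] .
  have "negligible ((\<lambda>g. z - g) ` \<Gamma>)" for z
  proof -
    obtain S where S: "finite S" "\<Gamma> = (\<Union>(a,b)\<in>S. closed_segment a b)"
      using assms unfolding polygon_def by blast
    have seg: "(\<lambda>g. z - g) ` closed_segment a b = closed_segment (z - a) (z - b)" for a b :: "real^2"
    proof -
      have "closed_segment (z + - a) (z + - b) = (\<lambda>x. z + x) ` closed_segment (- a) (- b)"
        by (rule closed_segment_translation)
      also have "closed_segment (- a) (- b) = uminus ` closed_segment a b"
        using closed_segment_linear_image[of uminus a b] by (simp add: linear_uminus)
      finally have "closed_segment (z + - a) (z + - b) = (\<lambda>g. z - g) ` closed_segment a b"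
        by (simp add: image_image)
      thus ?thesis by simp
    qed
    have "(\<lambda>g. z - g) ` \<Gamma> = (\<Union>(a,b)\<in>(\<lambda>(a,b). (z - a, z - b)) ` S. closed_segment a b)"
      unfolding S(2) image_UN by (auto simp: seg split_def)
    hence "polygon ((\<lambda>g. z - g) ` \<Gamma>)" unfolding polygon_def using S(1) by blast
    thus ?thesis by (rule polygon_negligible)
  qed
  hence "negligible N" unfolding N_def
    by (intro negligible_countable_Union) (use D(1) in auto)
  hence Nnull: "N \<in> null_sets lebesgue" by (simp add: negligible_iff_null_sets)
  define A where "A = UNIV - N"
  have disj: "d \<notin> minkowski_sum A \<Gamma>" if "d \<in> D" for d
  proof
    assume "d \<in> minkowski_sum A \<Gamma>"
    then obtain a g where "a \<in> A" "g \<in> \<Gamma>" "d = a + g" unfolding minkowski_sum_def by blast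
    hence "a \<in> N" unfolding N_def using that by force
    thus False using \<open>a \<in> A\<close> A_def by blast
  qed
  have "interior (minkowski_sum A \<Gamma>) = {}"
  proof (rule ccontr)
    assume "interior (minkowski_sum A \<Gamma>) \<noteq> {}"
    then obtain d where "d \<in> D" "d \<in> interior (minkowski_sum A \<Gamma>)" using D(2) by blast
    thus False using disj interior_subset by blast
  qed
  moreover have "UNIV - A \<in> null_sets lebesgue" using Nnull A_def by (simp add: Diff_Diff_Int)
  ultimately show ?thesis by blast
qed

end
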